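(* Let $Q_1,Q_2\ge1$ be integers, $\lambda_1,\lambda_2,\mu>0$, $p_{12},p_{21}\in[0,1]$, $s=\lambda_1+\lambda_2$, $s_1=\lambda_1+\lambda_2p_{21}$, $s_2=\lambda_2+\lambda_1p_{12}$, and $$q_i=\frac{\lambda_i}{s+\mu}\ (i=1,2),\quad q_3=\frac{\mu}{s+\mu},\quad A_1=\frac{s_1}{s_1+\mu},\quad A_2=\frac{s_2}{s_2+\mu},\quad B_1=\frac{\lambda_1}{s_2+\mu},\quad B_2=\frac{\lambda_2}{s_1+\mu}.$$ Then the stationary distribution $(\pi_{(j_1,j_2)})$ of the inventory CTMC with random replenishment (see context) is: $$\pi_{(Q_1-i_1,Q_2-i_2)}=\binom{i_1+i_2}{i_1}q_1^{i_1}q_2^{i_2}q_3,\quad 0\le i_1\le Q_1-1,\ 0\le i_2\le Q_2-1;$$ $$\pi_{(Q_1-i_1,0)}=B_2q_2^{Q_2-1}q_3\sum_{k=0}^{i_1}A_1^{i_1-k}q_1^k\binom{Q_2+k-1}{k},\quad 0\le i_1\le Q_1-1;$$ $$\pi_{(0,Q_2-i_2)}=B_1q_1^{Q_1-1}q_3\sum_{k=0}^{i_2}A_2^{i_2-k}q_2^k\binom{Q_1+k-1}{k},\quad 0\le i_2\le Q_2-1;$$ $$\pi_{(0,0)}=\frac{s_1}{\mu}B_2q_2^{Q_2-1}q_3\sum_{k=0}^{Q_1-1}A_1^{Q_1-1-k}q_1^k\binom{Q_2+k-1}{k}+\frac{s_2}{\mu}B_1q_1^{Q_1-1}q_3\s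um_{k=0}^{Q_2-1}A_2^{Q_2-1-k}q_2^k\binom{Q_1+k-1}{k}.$$
   Context: Inventory CTMC with random replenishment: state space $\{0,\dots,Q_1\}\times\{0,\dots,Q_2\}$; demand transitions: from $(i_1,i_2)$ with $i_1,i_2\ge1$, to $(i_1-1,i_2)$ at rate $\lambda_1$ and to $(i_1,i_2-1)$ at rate $\lambda_2$; from $(i_1,0)$ with $i_1\ge1$, to $(i_1-1,0)$ at rate $s_1$; from $(0,i_2)$ with $i_2\ge1$, to $(0,i_2-1)$ at rate $s_2$; no demand transitions out of $(0,0)$. In addition, from every state there is a replenishment transition to $(Q_1,Q_2)$ at rate $\mu$. (This models Poisson arrivals of rate $\lambda_i$ for product $i$, a customer for out-of-stock product $i$ buying the other product $j$ w.p. $p_{ij}$ if it is in stock, and exponential($\mu$) replenishment times restoring both stocks to $(Q_1,Q_2)$.) *)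

theory Defs
  imports Complex_Main
begin

definition inv_states :: "nat \<Rightarrow> nat \<Rightarrow> (nat \<times> nat) set" where
  "inv_states Q1 Q2 = {0..Q1} \<times> {0..Q2}"

text \<open>Self-loops (replenishment from (Q1,Q2) to itself) carry no rate.\<close>
definition inv_rate :: "nat \<Rightarrow> nat \<Rightarrow> real \<Rightarrow> real \<Rightarrow> real \<Rightarrow> real \<Rightarrow> real
    \<Rightarrow> nat \<times> nat \<Rightarrow> nat \<times> nat \<Rightarrow> real" where
  "inv_rate Q1 Q2 l1 l2 p12 p21 mu x y =
     (if x = y then 0 else
       (case x of (i1, i2) \<Rightarrow>
          (if 1 \<le> i1 \<and> 1 \<le> i2 then
             (if y = (i1 - 1, i2) then l1 else 0) + (if y = (i1, i2 - 1) then l2 else 0)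
           else if 1 \<le> i1 \<and> i2 = 0 then
             (if y = (i1 - 1, 0) then l1 + l2 * p21 else 0)
           else if i1 = 0 \<and> 1 \<le> i2 then
             (if y = (0, i2 - 1) then l2 + l1 * p12 else 0)
           else 0))
       + (if y = (Q1, Q2) then mu else 0))"

definition inv_stationary :: "nat \<Rightarrow> nat \<Rightarrow> real \<Rightarrow> real \<Rightarrow> real \<Rightarrow> real \<Rightarrow> real
    \<Rightarrow> (nat \<times> nat \<Rightarrow> real) \<Rightarrow> bool" where
  "inv_stationary Q1 Q2 l1 l2 p12 p21 mu \<pi> \<longleftrightarrow>
     (\<forall>x\<in>inv_states Q1 Q2. 0 \<le> \<pi> x) \<and>
     (\<Sum>x\<in>inv_states Q1 Q2. \<pi> x) = 1 \<and>
     (\<forall>y\<in>inv_states Q1 Q2.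
        (\<Sum>x\<in>inv_states Q1 Q2. \<pi> x * inv_rate Q1 Q2 l1 l2 p12 p21 mu x y)
        = \<pi> y * (\<Sum>z\<in>inv_states Q1 Q2. inv_rate Q1 Q2 l1 l2 p12 p21 mu y z))"

end

theory Submission
  imports Defs
begin

definition Dm :: "real \<Rightarrow> real \<Rightarrow> real \<Rightarrow> real \<Rightarrow> nat\<times>nat \<Rightarrow> nat\<times>nat \<Rightarrow> real" where
"Dm l1 l2 s1 s2 x y = (if x = (fst y + 1, snd y) then (if 1 \<le> snd y then l1 else s1) else 0)
   + (if x = (fst y, snd y + 1) then (if 1 \<le> fst y then l2 else s2) else 0)"

lemma rate_eq: "inv_rate Q1 Q2 l1 l2 p12 p21 mu x y =
   Dm l1 l2 (l1 + l2*p21) (l2 + l1*p12) x y + (if y = (Q1,Q2) \<and> x \<noteq> y then mu else 0)"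
proof -
  obtain i1 i2 where x: "x = (i1,i2)" by (cases x)
  obtain j1 j2 where y: "y = (j1,j2)" by (cases y)
  show ?thesis
    unfolding x y inv_rate_def Dm_def
    apply (cases "i1 = 0"; cases "i2 = 0")
    apply (simp_all split del: if_split)
    apply (simp_all)
    done
qed

lemma Dm_out: "Dm l1 l2 s1 s2 y z =
   (if 1 \<le> fst y \<and> z = (fst y - 1, snd y) then (if 1 \<le> snd y then l1 else s1) else 0)
 + (if 1 \<le> snd y \<and> z = (fst y, snd y - 1) then (if 1 \<le> fst y then l2 else s2) else 0)"
  by (cases y; cases z) (auto simp: Dm_def)


lemma sum_delta_pair: fixes g :: "'a \<Rightarrow> real" shows "finite A \<Longrightarrow> (\<Sum>x\<in>A. g x * (if x = a then c else 0)) = (if a \<in> A then g a * c else 0)"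
proof -
  assume f: "finite A"
  have "(\<Sum>x\<in>A. g x * (if x = a then c else 0)) = (\<Sum>x\<in>A. if x = a then g a * c else 0)"
    by (rule sum.cong) auto
  then show ?thesis using f by (simp add: sum.delta)
qed

locale invm =
  fixes Q1 Q2 :: nat and l1 l2 mu p12 p21 s s1 s2 q1 q2 q3 A1 A2 B1 B2 :: real
  assumes Q1: "1 \<le> Q1" and Q2: "1 \<le> Q2"
    and l1: "0 < l1" and l2: "0 < l2" and mu: "0 < mu"
    and p12: "0 \<le> p12" "p12 \<le> 1" and p21: "0 \<le> p21" "p21 \<le> 1"
    and s_def: "s = l1 + l2" and s1_def: "s1 = l1 + l2 * p21" and s2_def: "s2 = l2 + l1 * p12"
    and q1_def: "q1 = l1 / (s + mu)" and q2_def: "q2 = l2 / (s + mu)" and q3_def: "q3 = mu / (s + mu)"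
    and A1_def: "A1 = s1 / (s1 + mu)" and A2_def: "A2 = s2 / (s2 + mu)"
    and B1_def: "B1 = l1 / (s2 + mu)" and B2_def: "B2 = l2 / (s1 + mu)"
begin

abbreviation "St \<equiv> inv_states Q1 Q2"
abbreviation "rate \<equiv> inv_rate Q1 Q2 l1 l2 p12 p21 mu"

definition inflow :: "(nat \<times> nat \<Rightarrow> real) \<Rightarrow> nat \<times> nat \<Rightarrow> real" where
  "inflow g y = (if fst y < Q1 then g (fst y + 1, snd y) * (if 1 \<le> snd y then l1 else s1) else 0)
     + (if snd y < Q2 then g (fst y, snd y + 1) * (if 1 \<le> fst y then l2 else s2) else 0)"

definition dout :: "nat \<times> nat \<Rightarrow> real" where
  "dout y = (if 1 \<le> fst y then (if 1 \<le> snd y then l1 else s1) else 0)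
     + (if 1 \<le> snd y then (if 1 \<le> fst y then l2 else s2) else 0)"

lemma fin: "finite St" by (simp add: inv_states_def)
lemma top_in: "(Q1,Q2) \<in> St" by (simp add: inv_states_def)

lemma s1_nn: "0 \<le> s1" using s1_def l1 l2 p21 by simp
lemma s2_nn: "0 \<le> s2" using s2_def l1 l2 p12 by simp
lemma dout_nn: "0 \<le> dout y" using s1_nn s2_nn l1 l2 by (simp add: dout_def)

lemma in_sum:
  assumes "y \<in> St"
  shows "(\<Sum>x\<in>St. g x * rate x y) = inflow g y + (if y = (Q1,Q2) then mu * ((\<Sum>x\<in>St. g x) - g y) else 0)"
proof -
  have "(\<Sum>x\<in>St. g x * rate x y) = (\<Sum>x\<in>St. g x * Dm l1 l2 s1 s2 x y)
     + (\<Sum>x\<in>St. g x * (if y = (Q1,Q2) \<and> x \<noteq> y then mu else 0))"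
    by (simp add: rate_eq s1_def s2_def distrib_left sum.distrib)
  also have "(\<Sum>x\<in>St. g x * Dm l1 l2 s1 s2 x y) = inflow g y"
  proof -
    have "(\<Sum>x\<in>St. g x * Dm l1 l2 s1 s2 x y) =
      (\<Sum>x\<in>St. g x * (if x = (fst y + 1, snd y) then (if 1 \<le> snd y then l1 else s1) else 0))
    + (\<Sum>x\<in>St. g x * (if x = (fst y, snd y + 1) then (if 1 \<le> fst y then l2 else s2) else 0))"
      by (simp add: Dm_def distrib_left sum.distrib)
    also have "\<dots> = inflow g y"
      using assms by (simp only: sum_delta_pair[OF fin]) (auto simp: inflow_def inv_states_def)
    finally show ?thesis .
  qed
  also have "(\<Sum>x\<in>St. g x * (if y = (Q1,Q2) \<and> x \<noteq> y then mu else 0))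
      = (if y = (Q1,Q2) then mu * ((\<Sum>x\<in>St. g x) - g y) else 0)"
  proof (cases "y = (Q1,Q2)")
    case True
    have "(\<Sum>x\<in>St. g x * (if y = (Q1,Q2) \<and> x \<noteq> y then mu else 0)) = (\<Sum>x\<in>St. mu * g x - (if x = y then mu * g y else 0))"
      by (rule sum.cong) (auto simp: True)
    also have "\<dots> = mu * ((\<Sum>x\<in>St. g x) - g y)"
      using assms by (simp add: sum_subtractf sum_distrib_left sum.delta[OF fin] right_diff_distrib)
    finally show ?thesis using True by simp
  qed simp
  finally show ?thesis .
qed

lemma out_sum:
  assumes "y \<in> St"
  shows "(\<Sum>z\<in>St. rate y z) = dout y + (if y = (Q1,Q2) then 0 else mu)"
proof -
  have "(\<Sum>z\<in>St. rate y z) = (\<Sum>z\<in>St. Dm l1 l2 s1 s2 y z)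
     + (\<Sum>z\<in>St. (if z = (Q1,Q2) then (if y \<noteq> (Q1,Q2) then mu else 0) else 0))"
    unfolding rate_eq s1_def s2_def sum.distrib[symmetric]
    by (rule sum.cong) auto
  also have "(\<Sum>z\<in>St. Dm l1 l2 s1 s2 y z) = dout y"
  proof -
    have "(\<Sum>z\<in>St. Dm l1 l2 s1 s2 y z) =
      (\<Sum>z\<in>St. (if z = (fst y - 1, snd y) then (if 1 \<le> fst y then (if 1 \<le> snd y then l1 else s1) else 0) else 0))
    + (\<Sum>z\<in>St. (if z = (fst y, snd y - 1) then (if 1 \<le> snd y then (if 1 \<le> fst y then l2 else s2) else 0) else 0))"
      by (auto simp: Dm_out sum.distrib intro!: sum.cong)
    also have "\<dots> = dout y"
      using assms by (simp only: sum.delta[OF fin]) (auto simp: dout_def inv_states_def)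
    finally show ?thesis .
  qed
  also have "(\<Sum>z\<in>St. (if z = (Q1,Q2) then (if y \<noteq> (Q1,Q2) then mu else 0) else 0)) = (if y = (Q1,Q2) then 0 else mu)"
    using top_in by (simp add: sum.delta[OF fin])
  finally show ?thesis .
qed


lemma smu: "0 < s + mu" using s_def l1 l2 mu by simp
lemma s1mu: "0 < s1 + mu" using s1_nn mu by simp
lemma s2mu: "0 < s2 + mu" using s2_nn mu by simp

definition S1 :: "nat \<Rightarrow> real" where
  "S1 i = (\<Sum>k=0..i. A1 ^ (i - k) * q1 ^ k * real ((Q2 + k - 1) choose k))"
definition S2 :: "nat \<Rightarrow> real" where
  "S2 i = (\<Sum>k=0..i. A2 ^ (i - k) * q2 ^ k * real ((Q1 + k - 1) choose k))"

lemma S1_0: "S1 0 = 1" by (simp add: S1_def)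
lemma S2_0: "S2 0 = 1" by (simp add: S2_def)

lemma S1_Suc: "S1 (Suc i) = A1 * S1 i + q1 ^ Suc i * real ((Q2 + Suc i - 1) choose Suc i)"
proof -
  have "(\<Sum>k=0..i. A1 ^ (Suc i - k) * q1 ^ k * real ((Q2 + k - 1) choose k))
      = (\<Sum>k=0..i. A1 * (A1 ^ (i - k) * q1 ^ k * real ((Q2 + k - 1) choose k)))"
    by (rule sum.cong) (auto simp: Suc_diff_le)
  then show ?thesis unfolding S1_def
    by (simp add: sum.atLeast0_atMost_Suc sum_distrib_left)
qed

lemma S2_Suc: "S2 (Suc i) = A2 * S2 i + q2 ^ Suc i * real ((Q1 + Suc i - 1) choose Suc i)"
proof -
  have "(\<Sum>k=0..i. A2 ^ (Suc i - k) * q2 ^ k * real ((Q1 + k - 1) choose k))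
      = (\<Sum>k=0..i. A2 * (A2 ^ (i - k) * q2 ^ k * real ((Q1 + k - 1) choose k)))"
    by (rule sum.cong) (auto simp: Suc_diff_le)
  then show ?thesis unfolding S2_def
    by (simp add: sum.atLeast0_atMost_Suc sum_distrib_left)
qed

definition f :: "nat \<times> nat \<Rightarrow> real" where
  "f y = (if 1 \<le> fst y \<and> 1 \<le> snd y then
            real (((Q1 - fst y) + (Q2 - snd y)) choose (Q1 - fst y)) * q1 ^ (Q1 - fst y) * q2 ^ (Q2 - snd y) * q3
          else if 1 \<le> fst y then B2 * q2 ^ (Q2 - 1) * q3 * S1 (Q1 - fst y)
          else if 1 \<le> snd y then B1 * q1 ^ (Q1 - 1) * q3 * S2 (Q2 - snd y)
          else s1 / mu * B2 * q2 ^ (Q2 - 1) * q3 * S1 (Q1 - 1) + s2 / mu * B1 * q1 ^ (Q1 - 1) * q3 * S2 (Q2 - 1))"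

lemma f_int: "1 \<le> j1 \<Longrightarrow> 1 \<le> j2 \<Longrightarrow>
   f (j1, j2) = real (((Q1 - j1) + (Q2 - j2)) choose (Q1 - j1)) * q1 ^ (Q1 - j1) * q2 ^ (Q2 - j2) * q3"
  by (simp add: f_def)
lemma f_b1: "1 \<le> j1 \<Longrightarrow> f (j1, 0) = B2 * q2 ^ (Q2 - 1) * q3 * S1 (Q1 - j1)"
  by (simp add: f_def)
lemma f_b2: "1 \<le> j2 \<Longrightarrow> f (0, j2) = B1 * q1 ^ (Q1 - 1) * q3 * S2 (Q2 - j2)"
  by (simp add: f_def)
lemma f_00: "f (0, 0) = s1 / mu * B2 * q2 ^ (Q2 - 1) * q3 * S1 (Q1 - 1) + s2 / mu * B1 * q1 ^ (Q1 - 1) * q3 * S2 (Q2 - 1)"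
  by (simp add: f_def)

lemma q_nn: "0 \<le> q1" "0 \<le> q2" "0 \<le> q3" "0 \<le> A1" "0 \<le> A2" "0 \<le> B1" "0 \<le> B2"
  using smu s1mu s2mu s1_nn s2_nn l1 l2 mu
  by (simp_all add: q1_def q2_def q3_def A1_def A2_def B1_def B2_def)

lemma S_nn: "0 \<le> S1 i" "0 \<le> S2 i"
  using q_nn by (auto simp: S1_def S2_def intro!: sum_nonneg)

lemma f_nn: "0 \<le> f y"
  using q_nn S_nn s1_nn s2_nn mu unfolding f_def
  by (auto intro!: mult_nonneg_nonneg add_nonneg_nonneg divide_nonneg_nonneg)

lemma l1_eq: "l1 = q1 * (s + mu)" using smu by (simp add: q1_def)
lemma l2_eq: "l2 = q2 * (s + mu)" using smu by (simp add: q2_def)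
lemma B2_eq: "B2 * (s1 + mu) = l2" "B2 * s1 = l2 * A1" using s1mu by (simp_all add: B2_def A1_def)
lemma B1_eq: "B1 * (s2 + mu) = l1" "B1 * s2 = l1 * A2" using s2mu by (simp_all add: B1_def A2_def)

lemma pascal_alg:
  "real ((Suc a + Suc b) choose Suc a) * q1 ^ Suc a * q2 ^ Suc b * q3 * (s + mu)
   = real ((a + Suc b) choose a) * q1 ^ a * q2 ^ Suc b * q3 * l1
   + real ((Suc a + b) choose Suc a) * q1 ^ Suc a * q2 ^ b * q3 * l2"
proof -
  have c: "(Suc a + Suc b) choose (Suc a) = ((a + Suc b) choose a) + ((a + Suc b) choose (Suc a))"
    by simp
  have e: "Suc a + b = a + Suc b" by simp
  show ?thesis unfolding c e l1_eq l2_eq by (simp add: algebra_simps)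
qed

lemma bnd1_alg:
  "B2 * X * S1 (Suc a) * (s1 + mu) = B2 * X * S1 a * s1 + real ((Suc a + (Q2 - 1)) choose Suc a) * q1 ^ Suc a * X * l2"
proof -
  have e: "Q2 + Suc a - 1 = Suc a + (Q2 - 1)" using Q2 by simp
  have "B2 * X * S1 (Suc a) * (s1 + mu) = (B2 * (s1 + mu)) * X * S1 (Suc a)" by simp
  also have "\<dots> = l2 * X * (A1 * S1 a + q1 ^ Suc a * real ((Suc a + (Q2 - 1)) choose Suc a))"
    unfolding B2_eq S1_Suc e ..
  also have "\<dots> = (l2 * A1) * X * S1 a + real ((Suc a + (Q2 - 1)) choose Suc a) * q1 ^ Suc a * X * l2"
    by (simp add: algebra_simps)
  also have "\<dots> = B2 * X * S1 a * s1 + real ((Suc a + (Q2 - 1)) choose Suc a) * q1 ^ Suc a * X * l2"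
    unfolding B2_eq(2)[symmetric] by simp
  finally show ?thesis .
qed

lemma bnd2_alg:
  "B1 * X * S2 (Suc a) * (s2 + mu) = B1 * X * S2 a * s2 + real ((Suc a + (Q1 - 1)) choose Suc a) * q2 ^ Suc a * X * l1"
proof -
  have e: "Q1 + Suc a - 1 = Suc a + (Q1 - 1)" using Q1 by simp
  have "B1 * X * S2 (Suc a) * (s2 + mu) = (B1 * (s2 + mu)) * X * S2 (Suc a)" by simp
  also have "\<dots> = l1 * X * (A2 * S2 a + q2 ^ Suc a * real ((Suc a + (Q1 - 1)) choose Suc a))"
    unfolding B1_eq S2_Suc e ..
  also have "\<dots> = (l1 * A2) * X * S2 a + real ((Suc a + (Q1 - 1)) choose Suc a) * q2 ^ Suc a * X * l1"
    by (simp add: algebra_simps)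
  also have "\<dots> = B1 * X * S2 a * s2 + real ((Suc a + (Q1 - 1)) choose Suc a) * q2 ^ Suc a * X * l1"
    unfolding B1_eq(2)[symmetric] by simp
  finally show ?thesis .
qed


lemma f_local:
  assumes "y \<in> St" "y \<noteq> (Q1,Q2)"
  shows "f y * (dout y + mu) = inflow f y"
proof -
  obtain j1 j2 where y: "y = (j1,j2)" by (cases y)
  have j: "j1 \<le> Q1" "j2 \<le> Q2" using assms y by (auto simp: inv_states_def)
  consider (I) "1 \<le> j1" "1 \<le> j2" | (Bd1) "1 \<le> j1" "j2 = 0" | (Bd2) "j1 = 0" "1 \<le> j2" | (Z) "j1 = 0" "j2 = 0"
    by linarith
  then show ?thesis
  proof cases
    case I
    have ds: "dout y = s" using I y s_def by (simp add: dout_def)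
    have ne: "\<not> (Q1 - j1 = 0 \<and> Q2 - j2 = 0)" using assms(2) y j by auto
    consider (a) a b where "Q1 - j1 = Suc a" "Q2 - j2 = Suc b"
      | (b) b where "Q1 - j1 = 0" "Q2 - j2 = Suc b"
      | (c) a where "Q1 - j1 = Suc a" "Q2 - j2 = 0"
      using ne by (cases "Q1 - j1"; cases "Q2 - j2") auto
    then show ?thesis
    proof cases
      case (a a b)
      have h: "j1 < Q1" "j2 < Q2" "Q1 - Suc j1 = a" "Q2 - Suc j2 = b" using a by auto
      show ?thesis unfolding ds unfolding y inflow_def using pascal_alg[of a b] I h a
        by (simp add: f_int)
    next
      case (b b)
      have h: "\<not> j1 < Q1" "j2 < Q2" "Q2 - Suc j2 = b" using b j by auto
      show ?thesis unfolding ds unfolding y inflow_def using I h b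
        by (simp add: f_int l2_eq)
    next
      case (c a)
      have h: "j1 < Q1" "\<not> j2 < Q2" "Q1 - Suc j1 = a" using c j by auto
      show ?thesis unfolding ds unfolding y inflow_def using I h c
        by (simp add: f_int l1_eq)
    qed
  next
    case Bd1
    have ds: "dout y = s1" using Bd1 y by (simp add: dout_def)
    have q2p: "0 < Q2" using Q2 by simp
    show ?thesis
    proof (cases "Q1 - j1")
      case 0
      then have h: "\<not> j1 < Q1" using j by auto
      show ?thesis unfolding ds unfolding y inflow_def using Bd1 h 0 q2p
        by (simp add: f_int f_b1 S1_0 B2_eq(1)[symmetric] algebra_simps)
    next
      case (Suc a)
      then have h: "j1 < Q1" "Q1 - Suc j1 = a" by auto
      show ?thesis unfolding ds unfolding y inflow_def using Bd1 h Suc q2p bnd1_alg[of "q2 ^ (Q2 - 1) * q3" a]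
        by (simp add: f_int f_b1 algebra_simps)
    qed
  next
    case Bd2
    have ds: "dout y = s2" using Bd2 y by (simp add: dout_def)
    have q1p: "0 < Q1" using Q1 by simp
    show ?thesis
    proof (cases "Q2 - j2")
      case 0
      then have h: "\<not> j2 < Q2" using j by auto
      show ?thesis unfolding ds unfolding y inflow_def using Bd2 h 0 q1p
        by (simp add: f_int f_b2 S2_0 B1_eq(1)[symmetric] algebra_simps)
    next
      case (Suc a)
      then have h: "j2 < Q2" "Q2 - Suc j2 = a" by auto
      have sym: "(Q1 + a) choose (Q1 - Suc 0) = (Q1 + a) choose (Suc a)"
        using binomial_symmetric[of "Suc a" "Q1 + a"] q1p by simp
      show ?thesis unfolding ds unfolding y inflow_def using Bd2 h Suc q1p sym bnd2_alg[of "q1 ^ (Q1 - 1) * q3" a]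
        by (simp add: f_int f_b2 algebra_simps)
    qed
  next
    case Z
    have ds: "dout y = 0" using Z y by (simp add: dout_def)
    have p: "0 < Q1" "0 < Q2" using Q1 Q2 by auto
    show ?thesis unfolding ds unfolding y inflow_def using Z p mu
      by (simp add: f_b1 f_b2 f_00 field_simps)
  qed
qed


lemma unique:
  assumes g: "\<forall>y\<in>St. y \<noteq> (Q1,Q2) \<longrightarrow> g y * (dout y + mu) = inflow g y"
    and h: "\<forall>y\<in>St. y \<noteq> (Q1,Q2) \<longrightarrow> h y * (dout y + mu) = inflow h y"
    and top: "g (Q1,Q2) = h (Q1,Q2)"
  shows "\<forall>y\<in>St. g y = h y"
proof -
  have "\<forall>y\<in>St. (Q1 - fst y) + (Q2 - snd y) = n \<longrightarrow> g y = h y" for n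
  proof (induction n rule: less_induct)
    case (less n)
    show ?case
    proof (intro ballI impI)
      fix y assume y: "y \<in> St" and n: "(Q1 - fst y) + (Q2 - snd y) = n"
      show "g y = h y"
      proof (cases "y = (Q1,Q2)")
        case True then show ?thesis using top by simp
      next
        case False
        have pos: "dout y + mu \<noteq> 0" using dout_nn[of y] mu by linarith
        have e1: "g (fst y + 1, snd y) = h (fst y + 1, snd y)" if fy: "fst y < Q1"
        proof -
          have mem: "(fst y + 1, snd y) \<in> St" using y fy by (auto simp: inv_states_def)
          have lt: "(Q1 - fst (fst y + 1, snd y)) + (Q2 - snd (fst y + 1, snd y)) < n" using n fy by auto
          show ?thesis using less.IH[OF lt] mem lt by blast
        qed
        have e2: "g (fst y, snd y + 1) = h (fst y, snd y + 1)" if fy: "snd y < Q2"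
        proof -
          have mem: "(fst y, snd y + 1) \<in> St" using y fy by (auto simp: inv_states_def)
          have lt: "(Q1 - fst (fst y, snd y + 1)) + (Q2 - snd (fst y, snd y + 1)) < n" using n fy by auto
          show ?thesis using less.IH[OF lt] mem lt by blast
        qed
        have i: "inflow g y = inflow h y" unfolding inflow_def using e1 e2 by simp
        have "g y * (dout y + mu) = h y * (dout y + mu)" using g h y False i by simp
        then show ?thesis using pos by simp
      qed
    qed
  qed
  then show ?thesis by blast
qed

lemma formulas_iff:
  "((\<forall>i1 i2. i1 \<le> Q1 - 1 \<and> i2 \<le> Q2 - 1 \<longrightarrow>
        \<pi> (Q1 - i1, Q2 - i2) = real ((i1 + i2) choose i1) * q1 ^ i1 * q2 ^ i2 * q3) \<and>
     (\<forall>i1. i1 \<le> Q1 - 1 \<longrightarrow>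
        \<pi> (Q1 - i1, 0) = B2 * q2 ^ (Q2 - 1) * q3 *
          (\<Sum>k=0..i1. A1 ^ (i1 - k) * q1 ^ k * real ((Q2 + k - 1) choose k))) \<and>
     (\<forall>i2. i2 \<le> Q2 - 1 \<longrightarrow>
        \<pi> (0, Q2 - i2) = B1 * q1 ^ (Q1 - 1) * q3 *
          (\<Sum>k=0..i2. A2 ^ (i2 - k) * q2 ^ k * real ((Q1 + k - 1) choose k))) \<and>
     \<pi> (0, 0) =
        s1 / mu * B2 * q2 ^ (Q2 - 1) * q3 *
          (\<Sum>k=0..Q1 - 1. A1 ^ (Q1 - 1 - k) * q1 ^ k * real ((Q2 + k - 1) choose k))
      + s2 / mu * B1 * q1 ^ (Q1 - 1) * q3 *
          (\<Sum>k=0..Q2 - 1. A2 ^ (Q2 - 1 - k) * q2 ^ k * real ((Q1 + k - 1) choose k)))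
   \<longleftrightarrow> (\<forall>y\<in>St. \<pi> y = f y)" (is "?L \<longleftrightarrow> ?R")
proof
  assume L: ?L
  note L1 = conjunct1[OF L] and L2 = conjunct1[OF conjunct2[OF L]]
    and L3 = conjunct1[OF conjunct2[OF conjunct2[OF L]]] and L4 = conjunct2[OF conjunct2[OF conjunct2[OF L]]]
  show ?R
  proof
    fix y assume y: "y \<in> St"
    obtain j1 j2 where yy: "y = (j1,j2)" by (cases y)
    have j: "j1 \<le> Q1" "j2 \<le> Q2" using y yy by (auto simp: inv_states_def)
    consider (I) "1 \<le> j1" "1 \<le> j2" | (Bd1) "1 \<le> j1" "j2 = 0" | (Bd2) "j1 = 0" "1 \<le> j2" | (Z) "j1 = 0" "j2 = 0"
      by linarith
    then show "\<pi> y = f y"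
    proof cases
      case I
      have "\<pi> (Q1 - (Q1 - j1), Q2 - (Q2 - j2)) = real (((Q1 - j1) + (Q2 - j2)) choose (Q1 - j1)) * q1 ^ (Q1 - j1) * q2 ^ (Q2 - j2) * q3"
        by (rule L1[rule_format]) (use I j in auto)
      then show ?thesis using I j by (simp add: yy f_int)
    next
      case Bd1
      have "\<pi> (Q1 - (Q1 - j1), 0) = B2 * q2 ^ (Q2 - 1) * q3 * S1 (Q1 - j1)"
        unfolding S1_def by (rule L2[rule_format]) (use Bd1 j in auto)
      then show ?thesis using Bd1 j by (simp add: yy f_b1)
    next
      case Bd2
      have "\<pi> (0, Q2 - (Q2 - j2)) = B1 * q1 ^ (Q1 - 1) * q3 * S2 (Q2 - j2)"
        unfolding S2_def by (rule L3[rule_format]) (use Bd2 j in auto)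
      then show ?thesis using Bd2 j by (simp add: yy f_b2)
    qed (use L4 in \<open>simp add: yy f_00 S1_def S2_def\<close>)
  qed
next
  assume R: ?R
  have m: "(Q1 - i1, Q2 - i2) \<in> St" "(Q1 - i1, 0) \<in> St" "(0, Q2 - i2) \<in> St" "(0,0) \<in> St" for i1 i2
    by (auto simp: inv_states_def)
  show ?L
  proof (intro conjI allI impI)
    fix i1 i2 assume a: "i1 \<le> Q1 - 1 \<and> i2 \<le> Q2 - 1"
    have "1 \<le> Q1 - i1" "1 \<le> Q2 - i2" "Q1 - (Q1 - i1) = i1" "Q2 - (Q2 - i2) = i2" using a Q1 Q2 by auto
    then show "\<pi> (Q1 - i1, Q2 - i2) = real ((i1 + i2) choose i1) * q1 ^ i1 * q2 ^ i2 * q3"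
      using R m by (simp add: f_int)
  next
    fix i1 assume a: "i1 \<le> Q1 - 1"
    have "1 \<le> Q1 - i1" "Q1 - (Q1 - i1) = i1" using a Q1 by auto
    then show "\<pi> (Q1 - i1, 0) = B2 * q2 ^ (Q2 - 1) * q3 *
          (\<Sum>k=0..i1. A1 ^ (i1 - k) * q1 ^ k * real ((Q2 + k - 1) choose k))"
      using R m by (simp add: f_b1 S1_def)
  next
    fix i2 assume a: "i2 \<le> Q2 - 1"
    have "1 \<le> Q2 - i2" "Q2 - (Q2 - i2) = i2" using a Q2 by auto
    then show "\<pi> (0, Q2 - i2) = B1 * q1 ^ (Q1 - 1) * q3 *
          (\<Sum>k=0..i2. A2 ^ (i2 - k) * q2 ^ k * real ((Q1 + k - 1) choose k))"
      using R m by (simp add: f_b2 S2_def)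
  next
    show "\<pi> (0, 0) =
        s1 / mu * B2 * q2 ^ (Q2 - 1) * q3 *
          (\<Sum>k=0..Q1 - 1. A1 ^ (Q1 - 1 - k) * q1 ^ k * real ((Q2 + k - 1) choose k))
      + s2 / mu * B1 * q1 ^ (Q1 - 1) * q3 *
          (\<Sum>k=0..Q2 - 1. A2 ^ (Q2 - 1 - k) * q2 ^ k * real ((Q1 + k - 1) choose k))"
      using R m by (simp add: f_00 S1_def S2_def)
  qed
qed


lemma inflow_cong:
  assumes "y \<in> St" "\<forall>x\<in>St. g x = h x"
  shows "inflow g y = inflow h y"
proof -
  have "(fst y + 1, snd y) \<in> St" if "fst y < Q1" using assms(1) that by (auto simp: inv_states_def)
  moreover have "(fst y, snd y + 1) \<in> St" if "snd y < Q2" using assms(1) that by (auto simp: inv_states_def)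
  ultimately show ?thesis using assms(2) unfolding inflow_def by auto
qed

lemma inflow_top: "inflow g (Q1,Q2) = 0" by (simp add: inflow_def)
lemma dout_top: "dout (Q1,Q2) = s" using Q1 Q2 s_def by (simp add: dout_def)
lemma f_top: "f (Q1,Q2) = q3" using Q1 Q2 by (simp add: f_int)

lemma stat_iff: "inv_stationary Q1 Q2 l1 l2 p12 p21 mu \<pi> \<longleftrightarrow> (\<forall>y\<in>St. \<pi> y = f y)"
proof
  assume st: "inv_stationary Q1 Q2 l1 l2 p12 p21 mu \<pi>"
  then have sum1: "(\<Sum>x\<in>St. \<pi> x) = 1"
    and bal: "\<And>y. y \<in> St \<Longrightarrow> (\<Sum>x\<in>St. \<pi> x * rate x y) = \<pi> y * (\<Sum>z\<in>St. rate y z)"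
    by (auto simp: inv_stationary_def)
  have loc: "\<forall>y\<in>St. y \<noteq> (Q1,Q2) \<longrightarrow> \<pi> y * (dout y + mu) = inflow \<pi> y"
  proof (intro ballI impI)
    fix y assume y: "y \<in> St" "y \<noteq> (Q1,Q2)"
    show "\<pi> y * (dout y + mu) = inflow \<pi> y"
      using bal[OF y(1)] in_sum[OF y(1)] out_sum[OF y(1)] y(2) by simp
  qed
  have "mu * (1 - \<pi> (Q1,Q2)) = \<pi> (Q1,Q2) * s"
    using bal[OF top_in] in_sum[OF top_in] out_sum[OF top_in] sum1 by (simp add: inflow_top dout_top)
  then have "\<pi> (Q1,Q2) * (s + mu) = mu" by (simp add: algebra_simps)
  then have "\<pi> (Q1,Q2) = q3" using smu by (simp add: q3_def field_simps)
  then show "\<forall>y\<in>St. \<pi> y = f y"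
    using unique[OF loc] f_local f_top by auto
next
  assume eq: "\<forall>y\<in>St. \<pi> y = f y"
  have nn: "\<forall>x\<in>St. 0 \<le> \<pi> x" using eq f_nn by simp
  have loc: "\<pi> y * (dout y + mu) = inflow \<pi> y" if "y \<in> St" "y \<noteq> (Q1,Q2)" for y
    using f_local[OF that] inflow_cong[OF that(1) eq] eq that(1) by simp
  define d where "d y = (\<Sum>x\<in>St. \<pi> x * rate x y) - \<pi> y * (\<Sum>z\<in>St. rate y z)" for y
  have d0: "d y = 0" if "y \<in> St" "y \<noteq> (Q1,Q2)" for y
    using loc[OF that] in_sum[OF that(1)] out_sum[OF that(1)] that by (simp add: d_def)
  have "(\<Sum>y\<in>St. d y) = (\<Sum>y\<in>St. \<Sum>x\<in>St. \<pi> x * rate x y) - (\<Sum>y\<in>St. \<pi> y * (\<Sum>z\<in>St. rate y z))"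
    by (simp add: d_def sum_subtractf)
  also have "(\<Sum>y\<in>St. \<Sum>x\<in>St. \<pi> x * rate x y) = (\<Sum>x\<in>St. \<pi> x * (\<Sum>y\<in>St. rate x y))"
    by (subst sum.swap) (simp add: sum_distrib_left)
  finally have "(\<Sum>y\<in>St. d y) = 0" by simp
  moreover have "(\<Sum>y\<in>St. d y) = d (Q1,Q2) + (\<Sum>y\<in>St - {(Q1,Q2)}. d y)"
    using sum.remove[OF fin top_in] .
  moreover have "(\<Sum>y\<in>St - {(Q1,Q2)}. d y) = 0" using d0 by simp
  ultimately have dtop: "d (Q1,Q2) = 0" by simp
  then have "mu * ((\<Sum>x\<in>St. \<pi> x) - q3) = q3 * s"
    using in_sum[OF top_in] out_sum[OF top_in] eq f_top top_in
    by (simp add: d_def inflow_top dout_top)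
  then have E: "mu * (mu * (\<Sum>x\<in>St. \<pi> x)) + mu * (s * (\<Sum>x\<in>St. \<pi> x)) = mu * mu + mu * s"
    using smu mu by (simp add: q3_def field_simps)
  then have "(mu * (mu + s)) * ((\<Sum>x\<in>St. \<pi> x) - 1) = 0" by algebra
  then have sum1: "(\<Sum>x\<in>St. \<pi> x) = 1"
    using smu mu by simp
  have "\<forall>y\<in>St. (\<Sum>x\<in>St. \<pi> x * rate x y) = \<pi> y * (\<Sum>z\<in>St. rate y z)"
  proof
    fix y assume y: "y \<in> St"
    show "(\<Sum>x\<in>St. \<pi> x * rate x y) = \<pi> y * (\<Sum>z\<in>St. rate y z)"
    proof (cases "y = (Q1,Q2)")
      case True then show ?thesis using dtop by (simp add: d_def)
    next
      case False then show ?thesis using d0[OF y] by (simp add: d_def)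
    qed
  qed
  then show "inv_stationary Q1 Q2 l1 l2 p12 p21 mu \<pi>"
    using nn sum1 by (simp add: inv_stationary_def)
qed

end

theorem theorem3:
  fixes Q1 Q2 :: nat and l1 l2 mu p12 p21 s s1 s2 q1 q2 q3 A1 A2 B1 B2 :: real
    and \<pi> :: "nat \<times> nat \<Rightarrow> real"
  assumes "1 \<le> Q1" "1 \<le> Q2"
    and "0 < l1" "0 < l2" "0 < mu"
    and "0 \<le> p12" "p12 \<le> 1" "0 \<le> p21" "p21 \<le> 1"
    and "s = l1 + l2" "s1 = l1 + l2 * p21" "s2 = l2 + l1 * p12"
    and "q1 = l1 / (s + mu)" "q2 = l2 / (s + mu)" "q3 = mu / (s + mu)"
    and "A1 = s1 / (s1 + mu)" "A2 = s2 / (s2 + mu)"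
    and "B1 = l1 / (s2 + mu)" "B2 = l2 / (s1 + mu)"
  shows "inv_stationary Q1 Q2 l1 l2 p12 p21 mu \<pi> \<longleftrightarrow>
     (\<forall>i1 i2. i1 \<le> Q1 - 1 \<and> i2 \<le> Q2 - 1 \<longrightarrow>
        \<pi> (Q1 - i1, Q2 - i2) = real ((i1 + i2) choose i1) * q1 ^ i1 * q2 ^ i2 * q3) \<and>
     (\<forall>i1. i1 \<le> Q1 - 1 \<longrightarrow>
        \<pi> (Q1 - i1, 0) = B2 * q2 ^ (Q2 - 1) * q3 *
          (\<Sum>k=0..i1. A1 ^ (i1 - k) * q1 ^ k * real ((Q2 + k - 1) choose k))) \<and>
     (\<forall>i2. i2 \<le> Q2 - 1 \<longrightarrow>
        \<pi> (0, Q2 - i2) = B1 * q1 ^ (Q1 - 1) * q3 *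
          (\<Sum>k=0..i2. A2 ^ (i2 - k) * q2 ^ k * real ((Q1 + k - 1) choose k))) \<and>
     \<pi> (0, 0) =
        s1 / mu * B2 * q2 ^ (Q2 - 1) * q3 *
          (\<Sum>k=0..Q1 - 1. A1 ^ (Q1 - 1 - k) * q1 ^ k * real ((Q2 + k - 1) choose k))
      + s2 / mu * B1 * q1 ^ (Q1 - 1) * q3 *
          (\<Sum>k=0..Q2 - 1. A2 ^ (Q2 - 1 - k) * q2 ^ k * real ((Q1 + k - 1) choose k))"
  proof -
  interpret invm Q1 Q2 l1 l2 mu p12 p21 s s1 s2 q1 q2 q3 A1 A2 B1 B2
    using assms by unfold_locales
  show ?thesis using stat_iff formulas_iff by simp
qed

end
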